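(* Let $X$ be a real Hilbert space, let $T\colon X\to X$ be averaged nonexpansive and boundedly linearly regular, let $\rho>0$, and let $C$ be a nonempty subset of $\operatorname{Fix}T$. Then there exist $\alpha\in[0,1[$, $\beta\in]0,1]$ and $\gamma>0$ such that for every $x$ with $\|x\|\le\rho$: (a) $d_{\operatorname{Fix}T}(Tx)\le\alpha\,d_{\operatorname{Fix}T}(x)$; (b) $\beta\,d^2_{\operatorname{Fix}T}(x)\le\big(d_{\operatorname{Fix}T}(x)-d_{\operatorname{Fix}T}(Tx)\big)^2\le\|x-Tx\|^2$; (c) $d_C^2(Tx)\le d_C^2(x)-\gamma\,d^2_{\operatorname{Fix}T}(x)$. If $T$ is linearly regular, these constants can be chosen independently of $\rho$.
   Context: $T$ is averaged nonexpansive if $T=(1-\lambda)\mathrm{Id}+\lambda N$ with $\lambda\in[0,1[$ and $N$ nonexpansive. $T$ with $\operatorname{Fix}T\neq\varnothing$ is linearly regular if there is $\kappa\ge0$ with $d_{\operatorname{Fix}T}(x)\le\kappa\|x-Tx\|$ for all $x$; boundedly linearly regular if for each $\rho>0$ there is $\kappa\ge0$ with this for all $\|x\|\le\rho$. $d_S$ is the distance to $S$. *)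

theory Defs
  imports "HOL-Analysis.Analysis"
begin

definition Fix :: "('a \<Rightarrow> 'a) \<Rightarrow> 'a set" where
  "Fix T = {x. T x = x}"

definition nonexpansive :: "('a::real_normed_vector \<Rightarrow> 'a) \<Rightarrow> bool" where
  "nonexpansive N \<longleftrightarrow> (\<forall>x y. norm (N x - N y) \<le> norm (x - y))"

definition averaged_nonexpansive :: "('a::real_normed_vector \<Rightarrow> 'a) \<Rightarrow> bool" where
  "averaged_nonexpansive T \<longleftrightarrow>
     (\<exists>l N. 0 \<le> l \<and> l < 1 \<and> nonexpansive N \<and>
            T = (\<lambda>x. (1 - l) *\<^sub>R x + l *\<^sub>R N x))"

definition linearly_regular :: "('a::real_normed_vector \<Rightarrow> 'a) \<Rightarrow> bool" where
  "linearly_regular T \<longleftrightarrow> Fix T \<noteq> {} \<and>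
     (\<exists>\<kappa>\<ge>0. \<forall>x. infdist x (Fix T) \<le> \<kappa> * norm (x - T x))"

definition boundedly_linearly_regular :: "('a::real_normed_vector \<Rightarrow> 'a) \<Rightarrow> bool" where
  "boundedly_linearly_regular T \<longleftrightarrow> Fix T \<noteq> {} \<and>
     (\<forall>\<rho>>0. \<exists>\<kappa>\<ge>0. \<forall>x. norm x \<le> \<rho> \<longrightarrow> infdist x (Fix T) \<le> \<kappa> * norm (x - T x))"

end

theory Submission
  imports Defs
begin

lemma avg_identity:
  fixes a b :: "'a::real_inner"
  shows "(norm ((1 - l) *\<^sub>R a + l *\<^sub>R b))\<^sup>2 =
     (1 - l) * (norm a)\<^sup>2 + l * (norm b)\<^sup>2 - l * (1 - l) * (norm (a - b))\<^sup>2"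
  by (simp add: power2_norm_eq_inner inner_add_left inner_add_right inner_diff_left
      inner_diff_right inner_commute algebra_simps)

lemma key_ineq:
  fixes N :: "'a::real_inner \<Rightarrow> 'a"
  assumes l: "0 < l" "l < 1" and N: "nonexpansive N"
    and T: "T = (\<lambda>x. (1 - l) *\<^sub>R x + l *\<^sub>R N x)" and z: "z \<in> Fix T"
  shows "(norm (T x - z))\<^sup>2 \<le> (norm (x - z))\<^sup>2 - ((1 - l) / l) * (norm (x - T x))\<^sup>2"
proof -
  have "(1 - l) *\<^sub>R z + l *\<^sub>R N z = z" using z T by (simp add: Fix_def)
  then have "l *\<^sub>R N z = l *\<^sub>R z" by (simp add: algebra_simps)
  then have Nz: "N z = z" using l by simp
  have e1: "T x - z = (1 - l) *\<^sub>R (x - z) + l *\<^sub>R (N x - z)"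
    using T by (simp add: algebra_simps)
  have e2: "x - T x = l *\<^sub>R (x - N x)" using T by (simp add: algebra_simps)
  have ne: "norm (N x - z) \<le> norm (x - z)" using N Nz unfolding nonexpansive_def
    by metis
  hence ne2: "(norm (N x - z))\<^sup>2 \<le> (norm (x - z))\<^sup>2" by (simp add: power_mono)
  have "(norm (T x - z))\<^sup>2 = (1 - l) * (norm (x - z))\<^sup>2 + l * (norm (N x - z))\<^sup>2
      - l * (1 - l) * (norm ((x - z) - (N x - z)))\<^sup>2"
    unfolding e1 by (rule avg_identity)
  also have "(x - z) - (N x - z) = x - N x" by simp
  also have "((1 - l) / l) * (norm (x - T x))\<^sup>2 = l * (1 - l) * (norm (x - N x))\<^sup>2"
  proof -
    have "norm (x - T x) = l * norm (x - N x)" unfolding e2 using l by simp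
    thus ?thesis using l by (simp add: power2_eq_square field_simps)
  qed
  moreover have "l * (norm (N x - z))\<^sup>2 \<le> l * (norm (x - z))\<^sup>2"
    using ne2 l by (intro mult_left_mono) auto
  ultimately show ?thesis by (simp add: algebra_simps)
qed

lemma dist_ineq:
  fixes N :: "'a::real_inner \<Rightarrow> 'a"
  assumes l: "0 < l" "l < 1" and N: "nonexpansive N"
    and T: "T = (\<lambda>x. (1 - l) *\<^sub>R x + l *\<^sub>R N x)" and S: "S \<noteq> {}" "S \<subseteq> Fix T"
  shows "(infdist (T x) S)\<^sup>2 \<le> (infdist x S)\<^sup>2 - ((1 - l) / l) * (norm (x - T x))\<^sup>2"
proof -
  define r where "r = ((1 - l) / l) * (norm (x - T x))\<^sup>2"
  have r0: "r \<ge> 0" using l by (simp add: r_def)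
  have "sqrt ((infdist (T x) S)\<^sup>2 + r) \<le> dist x z" if z: "z \<in> S" for z
  proof -
    have "infdist (T x) S \<le> dist (T x) z" using z by (rule infdist_le)
    hence "(infdist (T x) S)\<^sup>2 \<le> (norm (T x - z))\<^sup>2"
      by (simp add: dist_norm infdist_nonneg power_mono)
    also have "\<dots> \<le> (norm (x - z))\<^sup>2 - r"
      unfolding r_def using key_ineq[OF l N T] z S by blast
    finally have "(infdist (T x) S)\<^sup>2 + r \<le> (dist x z)\<^sup>2" by (simp add: dist_norm)
    thus ?thesis by (metis dist_commute real_le_lsqrt zero_le_dist real_sqrt_ge_zero add_nonneg_nonneg r0 zero_le_power2 real_sqrt_le_iff real_sqrt_abs abs_of_nonneg)
  qed
  hence "sqrt ((infdist (T x) S)\<^sup>2 + r) \<le> infdist x S"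
    unfolding infdist_notempty[OF S(1)] using S(1) by (intro cINF_greatest) auto
  hence "((infdist (T x) S)\<^sup>2 + r) \<le> (infdist x S)\<^sup>2"
    using r0 by (metis add_nonneg_nonneg real_sqrt_le_iff sqrt_le_D zero_le_power2)
  thus ?thesis unfolding r_def by simp
qed

lemma general:
  fixes N :: "'a::real_inner \<Rightarrow> 'a"
  assumes l: "0 < l" "l < 1" and N: "nonexpansive N"
    and T: "T = (\<lambda>x. (1 - l) *\<^sub>R x + l *\<^sub>R N x)" and F: "Fix T \<noteq> {}"
    and C: "C \<noteq> {}" "C \<subseteq> Fix T"
    and k: "k > 0" "(1 - l) / l \<le> k\<^sup>2"
    and reg: "\<forall>x\<in>P. infdist x (Fix T) \<le> k * norm (x - T x)"
  shows "\<exists>\<alpha> \<beta> \<gamma>. 0 \<le> \<alpha> \<and> \<alpha> < 1 \<and> 0 < \<beta> \<and> \<beta> \<le> 1 \<and> \<gamma> > 0 \<and>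
           (\<forall>x\<in>P.
              infdist (T x) (Fix T) \<le> \<alpha> * infdist x (Fix T) \<and>
              \<beta> * (infdist x (Fix T))\<^sup>2 \<le> (infdist x (Fix T) - infdist (T x) (Fix T))\<^sup>2 \<and>
              (infdist x (Fix T) - infdist (T x) (Fix T))\<^sup>2 \<le> (norm (x - T x))\<^sup>2 \<and>
              (infdist (T x) C)\<^sup>2 \<le> (infdist x C)\<^sup>2 - \<gamma> * (infdist x (Fix T))\<^sup>2)"
proof -
  define c where "c = (1 - l) / l"
  define \<gamma> where "\<gamma> = c / k\<^sup>2"
  define \<alpha> where "\<alpha> = sqrt (1 - \<gamma>)"
  define \<beta> where "\<beta> = (1 - \<alpha>)\<^sup>2"
  have c0: "c > 0" using l by (simp add: c_def)
  have g0: "\<gamma> > 0" using c0 k by (simp add: \<gamma>_def)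
  have ck: "c \<le> k\<^sup>2" using k by (simp add: c_def)
  have k2: "k\<^sup>2 > 0" using k by simp
  have g1: "\<gamma> \<le> 1" using ck k2 by (simp add: \<gamma>_def)
  have a0: "0 \<le> \<alpha>" "\<alpha> < 1" using g0 g1 by (auto simp: \<alpha>_def)
  have b: "0 < \<beta>" "\<beta> \<le> 1" using a0 by (auto simp: \<beta>_def power_le_one)
  have main: "\<gamma> * (infdist x (Fix T))\<^sup>2 \<le> c * (norm (x - T x))\<^sup>2" if x: "x \<in> P" for x
  proof -
    have "infdist x (Fix T) \<le> k * norm (x - T x)" using reg x by blast
    hence "(infdist x (Fix T))\<^sup>2 \<le> (k * norm (x - T x))\<^sup>2"
      by (simp add: infdist_nonneg power_mono)
    hence "(infdist x (Fix T))\<^sup>2 \<le> k\<^sup>2 * (norm (x - T x))\<^sup>2" by (simp add: power_mult_distrib)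
    hence "c / k\<^sup>2 * (infdist x (Fix T))\<^sup>2 \<le> c / k\<^sup>2 * (k\<^sup>2 * (norm (x - T x))\<^sup>2)"
      using c0 k by (intro mult_left_mono) auto
    thus ?thesis using k by (simp add: \<gamma>_def)
  qed
  have "\<forall>x\<in>P.
              infdist (T x) (Fix T) \<le> \<alpha> * infdist x (Fix T) \<and>
              \<beta> * (infdist x (Fix T))\<^sup>2 \<le> (infdist x (Fix T) - infdist (T x) (Fix T))\<^sup>2 \<and>
              (infdist x (Fix T) - infdist (T x) (Fix T))\<^sup>2 \<le> (norm (x - T x))\<^sup>2 \<and>
              (infdist (T x) C)\<^sup>2 \<le> (infdist x C)\<^sup>2 - \<gamma> * (infdist x (Fix T))\<^sup>2"
  proof
    fix x assume x: "x \<in> P"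
    have m: "\<gamma> * (infdist x (Fix T))\<^sup>2 \<le> c * (norm (x - T x))\<^sup>2" using main x .
    have dF: "(infdist (T x) (Fix T))\<^sup>2 \<le> (infdist x (Fix T))\<^sup>2 - c * (norm (x - T x))\<^sup>2"
      unfolding c_def using dist_ineq[OF l N T F] by blast
    have dC: "(infdist (T x) C)\<^sup>2 \<le> (infdist x C)\<^sup>2 - c * (norm (x - T x))\<^sup>2"
      unfolding c_def using dist_ineq[OF l N T C] by blast
    have "(infdist (T x) (Fix T))\<^sup>2 \<le> (1 - \<gamma>) * (infdist x (Fix T))\<^sup>2"
      using dF m by (simp add: algebra_simps)
    also have "\<dots> = (\<alpha> * infdist x (Fix T))\<^sup>2"
      using g1 by (simp add: \<alpha>_def power_mult_distrib)
    finally have a: "infdist (T x) (Fix T) \<le> \<alpha> * infdist x (Fix T)"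
      using a0 by (meson infdist_nonneg mult_nonneg_nonneg power2_le_imp_le)
    have "(1 - \<alpha>) * infdist x (Fix T) \<le> infdist x (Fix T) - infdist (T x) (Fix T)"
      using a by (simp add: algebra_simps)
    hence "((1 - \<alpha>) * infdist x (Fix T))\<^sup>2 \<le> (infdist x (Fix T) - infdist (T x) (Fix T))\<^sup>2"
      using a0 by (intro power_mono) (auto simp: infdist_nonneg)
    hence bb: "\<beta> * (infdist x (Fix T))\<^sup>2 \<le> (infdist x (Fix T) - infdist (T x) (Fix T))\<^sup>2"
      by (simp add: \<beta>_def power_mult_distrib)
    have "\<bar>infdist x (Fix T) - infdist (T x) (Fix T)\<bar> \<le> norm (x - T x)"
      using infdist_triangle_abs[of x "Fix T" "T x"] by (simp add: dist_norm)
    hence cc: "(infdist x (Fix T) - infdist (T x) (Fix T))\<^sup>2 \<le> (norm (x - T x))\<^sup>2"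
      by (metis abs_ge_zero power2_abs power_mono)
    show "infdist (T x) (Fix T) \<le> \<alpha> * infdist x (Fix T) \<and>
              \<beta> * (infdist x (Fix T))\<^sup>2 \<le> (infdist x (Fix T) - infdist (T x) (Fix T))\<^sup>2 \<and>
              (infdist x (Fix T) - infdist (T x) (Fix T))\<^sup>2 \<le> (norm (x - T x))\<^sup>2 \<and>
              (infdist (T x) C)\<^sup>2 \<le> (infdist x C)\<^sup>2 - \<gamma> * (infdist x (Fix T))\<^sup>2"
      using a bb cc dC m by linarith
  qed
  thus ?thesis using a0 b g0 by blast
qed

lemma trivial_case:
  fixes T :: "'a::real_normed_vector \<Rightarrow> 'a"
  assumes "T = (\<lambda>x. x)" 
  shows "\<exists>\<alpha> \<beta> \<gamma>. 0 \<le> \<alpha> \<and> \<alpha> < 1 \<and> 0 < \<beta> \<and> \<beta> \<le> 1 \<and> \<gamma> > 0 \<and>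
           (\<forall>x\<in>P.
              infdist (T x) (Fix T) \<le> \<alpha> * infdist x (Fix T) \<and>
              \<beta> * (infdist x (Fix T))\<^sup>2 \<le> (infdist x (Fix T) - infdist (T x) (Fix T))\<^sup>2 \<and>
              (infdist x (Fix T) - infdist (T x) (Fix T))\<^sup>2 \<le> (norm (x - T x))\<^sup>2 \<and>
              (infdist (T x) C)\<^sup>2 \<le> (infdist x C)\<^sup>2 - \<gamma> * (infdist x (Fix T))\<^sup>2)"
proof -
  have "Fix T = UNIV" using assms by (auto simp: Fix_def)
  thus ?thesis using assms by (intro exI[of _ 0] exI[of _ 1]) auto
qed

lemma combined:
  fixes T :: "'a::real_inner \<Rightarrow> 'a"
  assumes av: "averaged_nonexpansive T" and F: "Fix T \<noteq> {}"
    and C: "C \<noteq> {}" "C \<subseteq> Fix T"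
    and reg: "k \<ge> 0" "\<forall>x\<in>P. infdist x (Fix T) \<le> k * norm (x - T x)"
  shows "\<exists>\<alpha> \<beta> \<gamma>. 0 \<le> \<alpha> \<and> \<alpha> < 1 \<and> 0 < \<beta> \<and> \<beta> \<le> 1 \<and> \<gamma> > 0 \<and>
           (\<forall>x\<in>P.
              infdist (T x) (Fix T) \<le> \<alpha> * infdist x (Fix T) \<and>
              \<beta> * (infdist x (Fix T))\<^sup>2 \<le> (infdist x (Fix T) - infdist (T x) (Fix T))\<^sup>2 \<and>
              (infdist x (Fix T) - infdist (T x) (Fix T))\<^sup>2 \<le> (norm (x - T x))\<^sup>2 \<and>
              (infdist (T x) C)\<^sup>2 \<le> (infdist x C)\<^sup>2 - \<gamma> * (infdist x (Fix T))\<^sup>2)"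
proof -
  obtain l N where l: "0 \<le> l" "l < 1" and N: "nonexpansive N"
    and T: "T = (\<lambda>x. (1 - l) *\<^sub>R x + l *\<^sub>R N x)"
    using av unfolding averaged_nonexpansive_def by blast
  show ?thesis
  proof (cases "l = 0")
    case True
    hence "T = (\<lambda>x. x)" using T by simp
    thus ?thesis by (rule trivial_case)
  next
    case False
    hence l0: "0 < l" using l by simp
    define c where "c = (1 - l) / l"
    have c0: "c \<ge> 0" using l by (simp add: c_def)
    define k' where "k' = k + 1 + c"
    have k'1: "k' \<ge> 1" using reg c0 by (simp add: k'_def)
    have "c \<le> k'" using reg by (simp add: k'_def)
    also have "k' \<le> k'\<^sup>2" using k'1 by (simp add: power2_eq_square)
    finally have ck: "(1 - l) / l \<le> k'\<^sup>2" by (simp add: c_def)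
    have reg': "\<forall>x\<in>P. infdist x (Fix T) \<le> k' * norm (x - T x)"
    proof
      fix x assume "x \<in> P"
      hence "infdist x (Fix T) \<le> k * norm (x - T x)" using reg by blast
      also have "\<dots> \<le> k' * norm (x - T x)"
        using c0 by (intro mult_right_mono) (auto simp: k'_def)
      finally show "infdist x (Fix T) \<le> k' * norm (x - T x)" .
    qed
    show ?thesis using general[OF l0 l(2) N T F C _ ck reg'] k'1 by simp
  qed
qed

theorem lemma3p7:
  fixes T :: "'a::{real_inner, complete_space} \<Rightarrow> 'a"
    and \<rho> :: real and C :: "'a set"
  assumes "averaged_nonexpansive T"
    and "boundedly_linearly_regular T"
    and "\<rho> > 0"
    and "C \<noteq> {}" and "C \<subseteq> Fix T"
  shows "(\<exists>\<alpha> \<beta> \<gamma>. 0 \<le> \<alpha> \<and> \<alpha> < 1 \<and> 0 < \<beta> \<and> \<beta> \<le> 1 \<and> \<gamma> > 0 \<and>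
           (\<forall>x. norm x \<le> \<rho> \<longrightarrow>
              infdist (T x) (Fix T) \<le> \<alpha> * infdist x (Fix T) \<and>
              \<beta> * (infdist x (Fix T))\<^sup>2 \<le> (infdist x (Fix T) - infdist (T x) (Fix T))\<^sup>2 \<and>
              (infdist x (Fix T) - infdist (T x) (Fix T))\<^sup>2 \<le> (norm (x - T x))\<^sup>2 \<and>
              (infdist (T x) C)\<^sup>2 \<le> (infdist x C)\<^sup>2 - \<gamma> * (infdist x (Fix T))\<^sup>2))
       \<and> (linearly_regular T \<longrightarrow>
          (\<exists>\<alpha> \<beta> \<gamma>. 0 \<le> \<alpha> \<and> \<alpha> < 1 \<and> 0 < \<beta> \<and> \<beta> \<le> 1 \<and> \<gamma> > 0 \<and>
           (\<forall>x.
              infdist (T x) (Fix T) \<le> \<alpha> * infdist x (Fix T) \<and>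
              \<beta> * (infdist x (Fix T))\<^sup>2 \<le> (infdist x (Fix T) - infdist (T x) (Fix T))\<^sup>2 \<and>
              (infdist x (Fix T) - infdist (T x) (Fix T))\<^sup>2 \<le> (norm (x - T x))\<^sup>2 \<and>
              (infdist (T x) C)\<^sup>2 \<le> (infdist x C)\<^sup>2 - \<gamma> * (infdist x (Fix T))\<^sup>2)))"
proof
  have F: "Fix T \<noteq> {}" using assms(2) by (simp add: boundedly_linearly_regular_def)
  obtain k where k: "k \<ge> 0" "\<forall>x. norm x \<le> \<rho> \<longrightarrow> infdist x (Fix T) \<le> k * norm (x - T x)"
    using assms(2,3) unfolding boundedly_linearly_regular_def by blast
  have k': "\<forall>x\<in>{x. norm x \<le> \<rho>}. infdist x (Fix T) \<le> k * norm (x - T x)" using k by simp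
  show "\<exists>\<alpha> \<beta> \<gamma>. 0 \<le> \<alpha> \<and> \<alpha> < 1 \<and> 0 < \<beta> \<and> \<beta> \<le> 1 \<and> \<gamma> > 0 \<and>
           (\<forall>x. norm x \<le> \<rho> \<longrightarrow>
              infdist (T x) (Fix T) \<le> \<alpha> * infdist x (Fix T) \<and>
              \<beta> * (infdist x (Fix T))\<^sup>2 \<le> (infdist x (Fix T) - infdist (T x) (Fix T))\<^sup>2 \<and>
              (infdist x (Fix T) - infdist (T x) (Fix T))\<^sup>2 \<le> (norm (x - T x))\<^sup>2 \<and>
              (infdist (T x) C)\<^sup>2 \<le> (infdist x C)\<^sup>2 - \<gamma> * (infdist x (Fix T))\<^sup>2)"
    using combined[OF assms(1) F assms(4,5) k(1) k'] by simp
next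
  show "linearly_regular T \<longrightarrow>
          (\<exists>\<alpha> \<beta> \<gamma>. 0 \<le> \<alpha> \<and> \<alpha> < 1 \<and> 0 < \<beta> \<and> \<beta> \<le> 1 \<and> \<gamma> > 0 \<and>
           (\<forall>x.
              infdist (T x) (Fix T) \<le> \<alpha> * infdist x (Fix T) \<and>
              \<beta> * (infdist x (Fix T))\<^sup>2 \<le> (infdist x (Fix T) - infdist (T x) (Fix T))\<^sup>2 \<and>
              (infdist x (Fix T) - infdist (T x) (Fix T))\<^sup>2 \<le> (norm (x - T x))\<^sup>2 \<and>
              (infdist (T x) C)\<^sup>2 \<le> (infdist x C)\<^sup>2 - \<gamma> * (infdist x (Fix T))\<^sup>2))"
  proof
    assume lr: "linearly_regular T"
    have F: "Fix T \<noteq> {}" using lr by (simp add: linearly_regular_def)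
    obtain k where k: "k \<ge> 0" "\<forall>x. infdist x (Fix T) \<le> k * norm (x - T x)"
      using lr unfolding linearly_regular_def by blast
    have k': "\<forall>x\<in>UNIV. infdist x (Fix T) \<le> k * norm (x - T x)" using k by simp
    show "\<exists>\<alpha> \<beta> \<gamma>. 0 \<le> \<alpha> \<and> \<alpha> < 1 \<and> 0 < \<beta> \<and> \<beta> \<le> 1 \<and> \<gamma> > 0 \<and>
           (\<forall>x.
              infdist (T x) (Fix T) \<le> \<alpha> * infdist x (Fix T) \<and>
              \<beta> * (infdist x (Fix T))\<^sup>2 \<le> (infdist x (Fix T) - infdist (T x) (Fix T))\<^sup>2 \<and>
              (infdist x (Fix T) - infdist (T x) (Fix T))\<^sup>2 \<le> (norm (x - T x))\<^sup>2 \<and>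
              (infdist (T x) C)\<^sup>2 \<le> (infdist x C)\<^sup>2 - \<gamma> * (infdist x (Fix T))\<^sup>2)"
      using combined[OF assms(1) F assms(4,5) k(1) k'] by simp
  qed
qed

end
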